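(* For every positively weighted finite graph $(G,w)$, every vertex $v$ of $G$ and every natural number $r\ge 1$, $$\lambda_1(G(v,r),w)\ge \lambda_1(\widetilde{G}(v,r),w).$$
   Context: A weighted graph $(G,w)$ is a simple graph with $w\colon E(G)\to\mathbb{R}^+$; subgraphs inherit the restricted weight. The ball $G(v,r)$ is the subgraph of $G$ induced on the vertices at distance at most $r$ from $v$. A non-backtracking walk is a walk $(v_0,v_1,\dots)$ with $v_i\ne v_{i+2}$ for all $i$. The unraveled ball $\widetilde{G}(v,r)$ is the graph whose vertices are the non-backtracking walks in $G$ of length at most $r$ starting at $v$, two walks adjacent iff one is a one-step extension of the other, with the edge between $(v_0,\dots,v_{i-1})$ and $(v_0,\dots,v_i)$ weighted $w(v_{i-1}v_i)$. $\lambda_1(H,w)$ denotes the spectral radius of the weighted adjacency matrix of $(H,w)$ (entry $w(uv)$ if $uv$ is an edge, $0$ otherwise). *)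

theory Defs
  imports Complex_Main
begin

definition weighted_graph :: "'v set \<Rightarrow> 'v set set \<Rightarrow> ('v set \<Rightarrow> real) \<Rightarrow> bool" where
  "weighted_graph V E w \<longleftrightarrow>
     (\<forall>e\<in>E. \<exists>x y. x \<in> V \<and> y \<in> V \<and> x \<noteq> y \<and> e = {x, y}) \<and> (\<forall>e\<in>E. w e > 0)"

definition wadj :: "'v set set \<Rightarrow> ('v set \<Rightarrow> real) \<Rightarrow> 'v \<Rightarrow> 'v \<Rightarrow> real" where
  "wadj E w u x = (if {u, x} \<in> E then w {u, x} else 0)"

definition wadj_eigenvalue :: "'v set \<Rightarrow> 'v set set \<Rightarrow> ('v set \<Rightarrow> real) \<Rightarrow> complex \<Rightarrow> bool" where
  "wadj_eigenvalue V E w \<mu> \<longleftrightarrow>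
     (\<exists>f :: 'v \<Rightarrow> complex. (\<exists>x\<in>V. f x \<noteq> 0) \<and>
        (\<forall>u\<in>V. (\<Sum>x\<in>V. complex_of_real (wadj E w u x) * f x) = \<mu> * f u))"

definition lambda1 :: "'v set \<Rightarrow> 'v set set \<Rightarrow> ('v set \<Rightarrow> real) \<Rightarrow> real" where
  "lambda1 V E w = Sup (cmod ` {\<mu>. wadj_eigenvalue V E w \<mu>})"

text \<open>Walks as nonempty vertex lists; a walk of length k has k+1 entries.\<close>
definition is_walk :: "'v set set \<Rightarrow> 'v list \<Rightarrow> bool" where
  "is_walk E xs \<longleftrightarrow> xs \<noteq> [] \<and> (\<forall>i. Suc i < length xs \<longrightarrow> {xs ! i, xs ! Suc i} \<in> E)"

definition is_nb_walk :: "'v set set \<Rightarrow> 'v list \<Rightarrow> bool" where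
  "is_nb_walk E xs \<longleftrightarrow> is_walk E xs \<and> (\<forall>i. i + 2 < length xs \<longrightarrow> xs ! i \<noteq> xs ! (i + 2))"

definition ball_V :: "'v set \<Rightarrow> 'v set set \<Rightarrow> 'v \<Rightarrow> nat \<Rightarrow> 'v set" where
  "ball_V V E v r = {u \<in> V. \<exists>xs. is_walk E xs \<and> hd xs = v \<and> last xs = u \<and> length xs \<le> r + 1}"

definition ball_E :: "'v set \<Rightarrow> 'v set set \<Rightarrow> 'v \<Rightarrow> nat \<Rightarrow> 'v set set" where
  "ball_E V E v r = {e \<in> E. e \<subseteq> ball_V V E v r}"

text \<open>Unraveled ball: vertices are non-backtracking walks from v of length at most r;
  edges join a walk to its one-step extensions; the edge {p, p@[x]} gets weight
  w {last p, x} = w (last ` {p, p@[x]}).\<close>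
definition unrav_V :: "'v set set \<Rightarrow> 'v \<Rightarrow> nat \<Rightarrow> 'v list set" where
  "unrav_V E v r = {xs. is_nb_walk E xs \<and> hd xs = v \<and> length xs \<le> r + 1}"

definition unrav_E :: "'v set set \<Rightarrow> 'v \<Rightarrow> nat \<Rightarrow> 'v list set set" where
  "unrav_E E v r = {{p, p @ [x]} | p x. p \<in> unrav_V E v r \<and> p @ [x] \<in> unrav_V E v r}"

definition unrav_w :: "('v set \<Rightarrow> real) \<Rightarrow> 'v list set \<Rightarrow> real" where
  "unrav_w w e = w (last ` e)"

end

theory Submission imports Defs "HOL-Analysis.Analysis" begin

lemma quad_expand:
  fixes a :: "'v \<Rightarrow> 'v \<Rightarrow> real"
  assumes sym: "\<And>u k. a u k = a k u"
  shows "(\<Sum>u\<in>V. \<Sum>k\<in>V. a u k * (x u + t * y u) * (x k + t * y k)) =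
    (\<Sum>u\<in>V. \<Sum>k\<in>V. a u k * x u * x k) + 2 * t * (\<Sum>u\<in>V. y u * (\<Sum>k\<in>V. a u k * x k))
    + t^2 * (\<Sum>u\<in>V. \<Sum>k\<in>V. a u k * y u * y k)"
proof -
  have sw: "(\<Sum>u\<in>V. \<Sum>k\<in>V. a u k * x u * y k) = (\<Sum>u\<in>V. \<Sum>k\<in>V. a u k * y u * x k)"
    by (subst sum.swap) (simp add: sym mult.commute mult.left_commute)
  have "(\<Sum>u\<in>V. \<Sum>k\<in>V. a u k * (x u + t * y u) * (x k + t * y k)) =
     (\<Sum>u\<in>V. \<Sum>k\<in>V. a u k * x u * x k) + t * (\<Sum>u\<in>V. \<Sum>k\<in>V. a u k * x u * y k)
     + t * (\<Sum>u\<in>V. \<Sum>k\<in>V. a u k * y u * x k) + t^2 * (\<Sum>u\<in>V. \<Sum>k\<in>V. a u k * y u * y k)"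
    by (simp add: sum.distrib sum_distrib_left algebra_simps power2_eq_square)
  also have "\<dots> = (\<Sum>u\<in>V. \<Sum>k\<in>V. a u k * x u * x k) + 2 * t * (\<Sum>u\<in>V. \<Sum>k\<in>V. a u k * y u * x k)
     + t^2 * (\<Sum>u\<in>V. \<Sum>k\<in>V. a u k * y u * y k)" using sw by simp
  also have "(\<Sum>u\<in>V. \<Sum>k\<in>V. a u k * y u * x k) = (\<Sum>u\<in>V. y u * (\<Sum>k\<in>V. a u k * x k))"
    by (simp add: sum_distrib_left mult.commute mult.left_commute)
  finally show ?thesis .
qed

lemma max_eig:
  fixes V :: "'v set" and a :: "'v \<Rightarrow> 'v \<Rightarrow> real"
  assumes fin: "finite V" and ne: "V \<noteq> {}" and sym: "\<And>u k. a u k = a k u"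
  shows "\<exists>M x. (\<forall>u\<in>V. (\<Sum>k\<in>V. a u k * x k) = M * x u) \<and> (\<Sum>u\<in>V. (x u)\<^sup>2) = 1 \<and>
     (\<forall>z. (\<Sum>u\<in>V. \<Sum>k\<in>V. a u k * z u * z k) \<le> M * (\<Sum>u\<in>V. (z u)\<^sup>2))"
proof -
  define Q where "Q z = (\<Sum>u\<in>V. \<Sum>k\<in>V. a u k * z u * z k)" for z :: "'v \<Rightarrow> real"
  define N where "N z = (\<Sum>u\<in>V. (z u)\<^sup>2)" for z :: "'v \<Rightarrow> real"
  define K where "K = (Pi\<^sub>E UNIV (\<lambda>u. if u \<in> V then {-1..1} else {0::real}))"
  have "compactin (product_topology (\<lambda>_. euclidean) UNIV) K"
    unfolding K_def by (subst compactin_PiE) auto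
  then have cK: "compact K" by (simp add: euclidean_product_topology)
  define S where "S = K \<inter> {z. N z = 1}"
  have cN: "continuous_on UNIV N" unfolding N_def
    by (intro continuous_intros continuous_on_product_coordinates)
  have cQ: "continuous_on UNIV Q" unfolding Q_def
    by (intro continuous_intros continuous_on_product_coordinates)
  have "closed {z. N z = 1}" by (rule closed_Collect_eq[OF cN]) auto
  with cK have cS: "compact S" unfolding S_def by auto
  obtain u0 where u0: "u0 \<in> V" using ne by auto
  have "(\<lambda>u. if u = u0 then 1 else 0::real) \<in> S"
  proof -
    have "(\<Sum>u\<in>V. ((\<lambda>u. if u = u0 then 1 else 0::real) u)\<^sup>2) = (\<Sum>u\<in>V. if u = u0 then 1 else 0)"
      by (rule sum.cong) auto
    then show ?thesis using u0 fin by (auto simp: S_def K_def N_def PiE_iff)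
  qed
  then have Sne: "S \<noteq> {}" by auto
  obtain x where xS: "x \<in> S" and xmax: "\<And>y. y \<in> S \<Longrightarrow> Q y \<le> Q x"
    using continuous_attains_sup[OF cS Sne continuous_on_subset[OF cQ]] by auto
  define M where "M = Q x"
  have Nx: "N x = 1" using xS by (simp add: S_def)
  have bound: "Q z \<le> M * N z" for z
  proof -
    define z' where "z' u = (if u \<in> V then z u else 0)" for u
    have Qz: "Q z' = Q z" "N z' = N z" by (simp_all add: Q_def N_def z'_def)
    show ?thesis
    proof (cases "N z = 0")
      case True
      then have "\<forall>u\<in>V. z u = 0" using fin unfolding N_def by (simp add: sum_nonneg_eq_0_iff)
      then show ?thesis using True by (simp add: Q_def)
    next
      case False
      have Npos: "N z > 0" using False unfolding N_def by (metis less_eq_real_def sum_nonneg zero_le_power2)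
      define s where "s = sqrt (N z)"
      have spos: "s > 0" using Npos by (simp add: s_def)
      have s2: "s^2 = N z" using Npos by (simp add: s_def)
      define y where "y u = z' u / s" for u
      have Ny: "N y = 1" using spos s2 Qz Npos
        by (simp add: N_def y_def power_divide sum_divide_distrib[symmetric])
      have yab: "\<bar>y u\<bar> \<le> 1" if "u \<in> V" for u
      proof -
        have "(z u)^2 \<le> N z" unfolding N_def
          using member_le_sum[of u V "\<lambda>u. (z u)^2"] that fin by auto
        then have "(y u)^2 \<le> 1" using spos s2 that Npos
          by (simp add: y_def z'_def power_divide divide_le_eq)
        then show ?thesis by (metis abs_le_square_iff abs_one one_power2)
      qed
      have "y u \<in> (if u \<in> V then {-1..1} else {0})" for u
      proof (cases "u \<in> V")
        case True then show ?thesis using yab[OF True] by (simp add: abs_le_iff)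
      qed (simp add: y_def z'_def)
      then have "y \<in> S" using Ny by (auto simp: S_def K_def PiE_iff)
      then have "Q y \<le> M" using xmax M_def by auto
      moreover have "Q y = Q z' / s^2"
        by (simp add: Q_def y_def sum_divide_distrib power2_eq_square)
      ultimately show ?thesis using s2 spos Qz Npos by (simp add: divide_le_eq mult.commute)
    qed
  qed
  define Ax where "Ax u = (\<Sum>k\<in>V. a u k * x k)" for u
  define y where "y u = (if u \<in> V then Ax u - M * x u else 0)" for u
  define c where "c = N y"
  define D where "D = M * N y - Q y"
  have D0: "D \<ge> 0" using bound[of y] by (simp add: D_def)
  have key: "2 * t * c \<le> t^2 * D" for t
  proof -
    have "Q (\<lambda>u. x u + t * y u) \<le> M * N (\<lambda>u. x u + t * y u)" by (rule bound)
    moreover have "Q (\<lambda>u. x u + t * y u) = Q x + 2 * t * (\<Sum>u\<in>V. y u * Ax u) + t^2 * Q y"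
      unfolding Q_def Ax_def by (rule quad_expand[OF sym])
    moreover have "N (\<lambda>u. x u + t * y u) = N x + 2 * t * (\<Sum>u\<in>V. x u * y u) + t^2 * N y"
      by (simp add: N_def power2_eq_square algebra_simps sum.distrib sum_distrib_left)
    moreover have "(\<Sum>u\<in>V. y u * Ax u) - M * (\<Sum>u\<in>V. x u * y u) = c"
      by (simp add: c_def N_def y_def sum_distrib_left power2_eq_square algebra_simps
          sum_subtractf[symmetric])
    ultimately show ?thesis using Nx M_def by (simp add: D_def algebra_simps)
  qed
  have "c = 0"
  proof (rule ccontr)
    assume "c \<noteq> 0"
    define t where "t = c / (D+1)"
    have Dp: "D + 1 > 0" using D0 by simp
    have tc: "t * c = c^2 / (D+1)" by (simp add: t_def power2_eq_square)
    have tcp: "t * c > 0" using tc Dp \<open>c \<noteq> 0\<close> by simp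
    have "t^2 * D = (t * c) * (D / (D+1))" by (simp add: t_def power2_eq_square)
    also have "\<dots> < t * c" using tcp Dp by (simp add: divide_less_eq algebra_simps)
    finally have "t^2 * D < 2 * t * c" using tcp by simp
    with key[of t] show False by simp
  qed
  then have "\<forall>u\<in>V. y u = 0" using fin unfolding c_def N_def by (simp add: sum_nonneg_eq_0_iff)
  then have eig: "\<forall>u\<in>V. Ax u = M * x u" by (simp add: y_def)
  show ?thesis
    apply (rule exI[of _ M], rule exI[of _ x])
    using eig Nx bound by (simp add: Ax_def N_def Q_def)
qed


lemma eig_mod:
  fixes f :: "'v \<Rightarrow> complex" and a :: "'v \<Rightarrow> 'v \<Rightarrow> real"
  assumes fin: "finite V" and nn: "\<And>u k. a u k \<ge> 0"
    and eq: "\<forall>u\<in>V. (\<Sum>k\<in>V. complex_of_real (a u k) * f k) = \<mu> * f u"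
  shows "cmod \<mu> * (\<Sum>u\<in>V. (cmod (f u))\<^sup>2) \<le> (\<Sum>u\<in>V. \<Sum>k\<in>V. a u k * cmod (f u) * cmod (f k))"
proof -
  have row: "cmod \<mu> * cmod (f u) \<le> (\<Sum>k\<in>V. a u k * cmod (f k))" if "u \<in> V" for u
  proof -
    have "cmod \<mu> * cmod (f u) = cmod (\<Sum>k\<in>V. complex_of_real (a u k) * f k)"
      using eq that by (simp add: norm_mult)
    also have "\<dots> \<le> (\<Sum>k\<in>V. cmod (complex_of_real (a u k) * f k))" by (rule norm_sum)
    also have "\<dots> = (\<Sum>k\<in>V. a u k * cmod (f k))"
      using nn by (simp add: norm_mult)
    finally show ?thesis .
  qed
  have "cmod \<mu> * (\<Sum>u\<in>V. (cmod (f u))\<^sup>2) = (\<Sum>u\<in>V. cmod (f u) * (cmod \<mu> * cmod (f u)))"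
    by (simp add: sum_distrib_left power2_eq_square algebra_simps)
  also have "\<dots> \<le> (\<Sum>u\<in>V. cmod (f u) * (\<Sum>k\<in>V. a u k * cmod (f k)))"
    by (rule sum_mono) (simp add: row mult_left_mono)
  also have "\<dots> = (\<Sum>u\<in>V. \<Sum>k\<in>V. a u k * cmod (f u) * cmod (f k))"
    by (simp add: sum_distrib_left algebra_simps)
  finally show ?thesis .
qed

lemma lambda1_facts:
  fixes V :: "'v set"
  assumes fin: "finite V" and ne: "V \<noteq> {}" and nn: "\<And>u k. wadj E w u k \<ge> 0"
  shows "\<exists>x. (\<Sum>u\<in>V. (x u)\<^sup>2) = 1 \<and>
     (\<Sum>u\<in>V. \<Sum>k\<in>V. wadj E w u k * x u * x k) = lambda1 V E w \<and>
     (\<forall>z. (\<Sum>u\<in>V. \<Sum>k\<in>V. wadj E w u k * z u * z k) \<le> lambda1 V E w * (\<Sum>u\<in>V. (z u)\<^sup>2))"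
proof -
  have sym: "\<And>u k. wadj E w u k = wadj E w k u" by (simp add: wadj_def insert_commute)
  obtain M x where eig: "\<forall>u\<in>V. (\<Sum>k\<in>V. wadj E w u k * x k) = M * x u"
    and Nx: "(\<Sum>u\<in>V. (x u)\<^sup>2) = 1"
    and bound: "\<forall>z. (\<Sum>u\<in>V. \<Sum>k\<in>V. wadj E w u k * z u * z k) \<le> M * (\<Sum>u\<in>V. (z u)\<^sup>2)"
    using max_eig[OF fin ne, of "wadj E w", OF sym] by blast
  have Qx: "(\<Sum>u\<in>V. \<Sum>k\<in>V. wadj E w u k * x u * x k) = M"
  proof -
    have "(\<Sum>u\<in>V. \<Sum>k\<in>V. wadj E w u k * x u * x k) = (\<Sum>u\<in>V. x u * (\<Sum>k\<in>V. wadj E w u k * x k))"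
      by (simp add: sum_distrib_left algebra_simps)
    also have "\<dots> = (\<Sum>u\<in>V. M * (x u)\<^sup>2)"
      by (rule sum.cong) (use eig in \<open>simp_all add: power2_eq_square\<close>)
    also have "\<dots> = M" using Nx by (simp add: sum_distrib_left[symmetric])
    finally show ?thesis .
  qed
  define Ev where "Ev = {\<mu>. wadj_eigenvalue V E w \<mu>}"
  have le: "cmod \<mu> \<le> M" if "\<mu> \<in> Ev" for \<mu>
  proof -
    have "wadj_eigenvalue V E w \<mu>" using that by (simp add: Ev_def)
    then obtain f where ff: "(\<exists>x\<in>V. f x \<noteq> 0) \<and>
        (\<forall>u\<in>V. (\<Sum>x\<in>V. complex_of_real (wadj E w u x) * f x) = \<mu> * f u)"
      unfolding wadj_eigenvalue_def by (elim exE) (rule that)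
    then have f0: "\<exists>x\<in>V. f x \<noteq> 0"
      and feq: "\<forall>u\<in>V. (\<Sum>x\<in>V. complex_of_real (wadj E w u x) * f x) = \<mu> * f u" by auto
    have pos: "(\<Sum>u\<in>V. (cmod (f u))\<^sup>2) > 0"
    proof -
      obtain u where "u \<in> V" "f u \<noteq> 0" using f0 by auto
      then have "0 < (cmod (f u))\<^sup>2" by simp
      also have "\<dots> \<le> (\<Sum>u\<in>V. (cmod (f u))\<^sup>2)"
        using member_le_sum[of u V "\<lambda>u. (cmod (f u))\<^sup>2"] \<open>u \<in> V\<close> fin by simp
      finally show ?thesis .
    qed
    have "cmod \<mu> * (\<Sum>u\<in>V. (cmod (f u))\<^sup>2) \<le> (\<Sum>u\<in>V. \<Sum>k\<in>V. wadj E w u k * cmod (f u) * cmod (f k))"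
      by (rule eig_mod[OF fin nn feq])
    also have "\<dots> \<le> M * (\<Sum>u\<in>V. (cmod (f u))\<^sup>2)" using bound[rule_format, of "\<lambda>u. cmod (f u)"] by simp
    finally show ?thesis by (rule mult_right_le_imp_le[OF _ pos])
  qed
  have Min: "complex_of_real M \<in> Ev"
  proof -
    have ex: "\<exists>u\<in>V. x u \<noteq> 0"
    proof (rule ccontr)
      assume "\<not> (\<exists>u\<in>V. x u \<noteq> 0)"
      then have "(\<Sum>u\<in>V. (x u)\<^sup>2) = 0" by simp
      with Nx show False by simp
    qed
    have "wadj_eigenvalue V E w (complex_of_real M)" unfolding wadj_eigenvalue_def
    proof (intro exI[of _ "\<lambda>u. complex_of_real (x u)"] conjI)
      show "\<exists>u\<in>V. complex_of_real (x u) \<noteq> 0" using ex by auto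
      show "\<forall>u\<in>V. (\<Sum>k\<in>V. complex_of_real (wadj E w u k) * complex_of_real (x k)) = complex_of_real M * complex_of_real (x u)"
      proof
        fix u assume u: "u \<in> V"
        have "(\<Sum>k\<in>V. complex_of_real (wadj E w u k) * complex_of_real (x k)) = complex_of_real (\<Sum>k\<in>V. wadj E w u k * x k)"
          by simp
        also have "\<dots> = complex_of_real (M * x u)" using eig u by simp
        finally show "(\<Sum>k\<in>V. complex_of_real (wadj E w u k) * complex_of_real (x k)) = complex_of_real M * complex_of_real (x u)"
          by simp
      qed
    qed
    then show ?thesis by (simp add: Ev_def)
  qed
  have "\<bar>M\<bar> \<le> M" using le[OF Min] by simp
  then have M0: "M \<ge> 0" by simp
  have "lambda1 V E w = M"
    unfolding lambda1_def Ev_def[symmetric]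
  proof (rule cSup_eq_maximum)
    show "M \<in> cmod ` Ev" by (rule rev_image_eqI[OF Min]) (use M0 in simp)
    show "\<And>y. y \<in> cmod ` Ev \<Longrightarrow> y \<le> M" using le by blast
  qed
  then show ?thesis using Nx Qx bound by auto
qed


lemma edge_in_V:
  assumes "weighted_graph V E w" "{a, b} \<in> E"
  shows "a \<in> V" "b \<in> V" "w {a,b} > 0"
  using assms unfolding weighted_graph_def by (fastforce simp: doubleton_eq_iff)+

lemma walk_set:
  assumes wg: "weighted_graph V E w" and wk: "is_walk E xs" and h: "hd xs \<in> V"
  shows "set xs \<subseteq> V"
proof -
  have "xs ! i \<in> V" if "i < length xs" for i
    using that
  proof (induction i)
    case 0 then show ?case using h wk by (simp add: hd_conv_nth is_walk_def)
  next
    case (Suc i)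
    then have "{xs ! i, xs ! Suc i} \<in> E" using wk by (simp add: is_walk_def)
    then show ?case using edge_in_V[OF wg] by blast
  qed
  then show ?thesis by (auto simp: in_set_conv_nth)
qed

lemma no_backtrack:
  assumes "is_nb_walk E (q @ [y, x])" "q \<noteq> []" "last q = x"
  shows False
proof -
  let ?i = "length q - 1"
  have "?i + 2 < length (q @ [y, x])" using assms(2) by simp
  then have "(q @ [y, x]) ! ?i \<noteq> (q @ [y, x]) ! (?i + 2)"
    using assms(1) unfolding is_nb_walk_def by blast
  moreover have "(q @ [y, x]) ! ?i = x" using assms(2,3)
    by (simp add: nth_append last_conv_nth)
  moreover have "(q @ [y, x]) ! (?i + 2) = x" using assms(2)
    by (simp add: nth_append)
  ultimately show False by simp
qed

lemma ext_edge:
  assumes "is_walk E (p @ [x])" "p \<noteq> []"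
  shows "{last p, x} \<in> E"
proof -
  let ?i = "length p - 1"
  have "Suc ?i < length (p @ [x])" using assms(2) by simp
  then have "{(p @ [x]) ! ?i, (p @ [x]) ! Suc ?i} \<in> E" using assms(1) unfolding is_walk_def by blast
  moreover have "(p @ [x]) ! ?i = last p" using assms(2) by (simp add: nth_append last_conv_nth)
  moreover have "(p @ [x]) ! Suc ?i = x" using assms(2) by (simp add: nth_append)
  ultimately show ?thesis by simp
qed

lemma ue_cases:
  assumes "{p, q} \<in> unrav_E E v r"
  shows "p \<in> unrav_V E v r \<and> q \<in> unrav_V E v r \<and> ((\<exists>x. q = p @ [x]) \<or> (\<exists>x. p = q @ [x]))"
  using assms unfolding unrav_E_def by (auto simp: doubleton_eq_iff)

lemma unrav_nonempty: "p \<in> unrav_V E v r \<Longrightarrow> p \<noteq> []"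
  by (simp add: unrav_V_def is_nb_walk_def is_walk_def)

lemma unique_nb:
  assumes "{p, q1} \<in> unrav_E E v r" "{p, q2} \<in> unrav_E E v r" "last q1 = last q2"
  shows "q1 = q2"
proof -
  have A: "p \<in> unrav_V E v r" "q1 \<in> unrav_V E v r" "q2 \<in> unrav_V E v r"
    and c1: "(\<exists>x. q1 = p @ [x]) \<or> (\<exists>x. p = q1 @ [x])"
    and c2: "(\<exists>x. q2 = p @ [x]) \<or> (\<exists>x. p = q2 @ [x])"
    using ue_cases[OF assms(1)] ue_cases[OF assms(2)] by auto
  show ?thesis
  proof (cases "\<exists>x. q1 = p @ [x]")
    case True
    then obtain x1 where x1: "q1 = p @ [x1]" by auto
    show ?thesis
    proof (cases "\<exists>x. q2 = p @ [x]")
      case True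
      then obtain x2 where "q2 = p @ [x2]" by auto
      then show ?thesis using x1 assms(3) by simp
    next
      case False
      then obtain x2 where x2: "p = q2 @ [x2]" using c2 by auto
      have "is_nb_walk E (q2 @ [x2, x1])" using A(2) x1 x2 by (simp add: unrav_V_def)
      moreover have "last q2 = x1" using assms(3) x1 by simp
      ultimately show ?thesis using no_backtrack[of E q2 x2 x1] unrav_nonempty[OF A(3)] by simp
    qed
  next
    case False
    then obtain x1 where x1: "p = q1 @ [x1]" using c1 by auto
    show ?thesis
    proof (cases "\<exists>x. q2 = p @ [x]")
      case True
      then obtain x2 where x2: "q2 = p @ [x2]" by auto
      have "is_nb_walk E (q1 @ [x1, x2])" using A(3) x1 x2 by (simp add: unrav_V_def)
      moreover have "last q1 = x2" using assms(3) x2 by simp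
      ultimately show ?thesis using no_backtrack[of E q1 x1 x2] unrav_nonempty[OF A(2)] by simp
    next
      case False
      then obtain x2 where x2: "p = q2 @ [x2]" using c2 by auto
      then show ?thesis using x1 by simp
    qed
  qed
qed

lemma match_ineq:
  fixes h :: "'a \<Rightarrow> real"
  assumes finA: "finite A" and finB: "finite B" and hnn: "\<And>p. h p \<ge> 0"
    and u1: "\<And>p q1 q2. p \<in> A \<Longrightarrow> q1 \<in> B \<Longrightarrow> q2 \<in> B \<Longrightarrow> R p q1 \<Longrightarrow> R p q2 \<Longrightarrow> q1 = q2"
    and u2: "\<And>q p1 p2. q \<in> B \<Longrightarrow> p1 \<in> A \<Longrightarrow> p2 \<in> A \<Longrightarrow> R p1 q \<Longrightarrow> R p2 q \<Longrightarrow> p1 = p2"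
  shows "(\<Sum>p\<in>A. \<Sum>q\<in>B. (if R p q then h p * h q else 0)) \<le> L2_set h A * L2_set h B"
proof -
  define k where "k p = (\<Sum>q\<in>B. (if R p q then h q else 0))" for p
  have k2: "(k p)\<^sup>2 = (\<Sum>q\<in>B. (if R p q then (h q)\<^sup>2 else 0))" if "p \<in> A" for p
  proof (cases "\<exists>q0\<in>B. R p q0")
    case True
    then obtain q0 where q0: "q0 \<in> B" "R p q0" by auto
    have "k p = (\<Sum>q\<in>B. (if q = q0 then h q else 0))"
      unfolding k_def by (rule sum.cong) (use u1[OF that] q0 in auto)
    also have "\<dots> = h q0" using finB q0 by simp
    finally have "(k p)\<^sup>2 = (h q0)\<^sup>2" by simp
    moreover have "(\<Sum>q\<in>B. (if R p q then (h q)\<^sup>2 else 0)) = (\<Sum>q\<in>B. (if q = q0 then (h q)\<^sup>2 else 0))"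
      by (rule sum.cong) (use u1[OF that] q0 in auto)
    ultimately show ?thesis using finB q0 by simp
  next
    case False
    then show ?thesis by (simp add: k_def)
  qed
  have cnt: "(\<Sum>p\<in>A. (if R p q then 1 else 0)) \<le> (1::real)" if "q \<in> B" for q
  proof (cases "\<exists>p0\<in>A. R p0 q")
    case True
    then obtain p0 where p0: "p0 \<in> A" "R p0 q" by auto
    have "(\<Sum>p\<in>A. (if R p q then 1 else 0)) = (\<Sum>p\<in>A. (if p = p0 then 1 else 0::real))"
      by (rule sum.cong) (use u2[OF that] p0 in auto)
    then show ?thesis using finA p0 by simp
  next
    case False
    then show ?thesis by simp
  qed
  have "(\<Sum>p\<in>A. (k p)\<^sup>2) = (\<Sum>p\<in>A. \<Sum>q\<in>B. (if R p q then (h q)\<^sup>2 else 0))"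
    using k2 by simp
  also have "\<dots> = (\<Sum>q\<in>B. (h q)\<^sup>2 * (\<Sum>p\<in>A. (if R p q then 1 else 0)))"
    by (subst sum.swap) (simp add: sum_distrib_left if_distrib cong: if_cong)
  also have "\<dots> \<le> (\<Sum>q\<in>B. (h q)\<^sup>2)"
    by (rule sum_mono) (use cnt in \<open>auto intro: mult_left_le\<close>)
  finally have kk: "(\<Sum>p\<in>A. (k p)\<^sup>2) \<le> (\<Sum>q\<in>B. (h q)\<^sup>2)" .
  have knn: "k p \<ge> 0" for p unfolding k_def by (rule sum_nonneg) (simp add: hnn)
  have "(\<Sum>p\<in>A. \<Sum>q\<in>B. (if R p q then h p * h q else 0)) = (\<Sum>p\<in>A. \<bar>h p\<bar> * \<bar>k p\<bar>)"
    using hnn knn by (simp add: k_def sum_distrib_left if_distrib cong: if_cong)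
  also have "\<dots> \<le> L2_set h A * L2_set k A" by (rule L2_set_mult_ineq)
  also have "L2_set k A \<le> L2_set h B" unfolding L2_set_def using kk by simp
  then have "L2_set h A * L2_set k A \<le> L2_set h A * L2_set h B"
    by (simp add: mult_left_mono L2_set_nonneg)
  finally show ?thesis .
qed


lemma edge_weight:
  assumes wg: "weighted_graph V E w" and e: "{p, q} \<in> unrav_E E v r"
  shows "{last p, last q} \<in> E \<and> unrav_w w {p, q} = w {last p, last q}"
proof -
  have A: "p \<in> unrav_V E v r" "q \<in> unrav_V E v r"
    and c: "(\<exists>x. q = p @ [x]) \<or> (\<exists>x. p = q @ [x])" using ue_cases[OF e] by auto
  show ?thesis
  proof (cases "\<exists>x. q = p @ [x]")
    case True
    then obtain x where x: "q = p @ [x]" by auto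
    have "is_walk E (p @ [x])" using A(2) x by (simp add: unrav_V_def is_nb_walk_def)
    then have "{last p, x} \<in> E" using ext_edge[of E p x] unrav_nonempty[OF A(1)] by simp
    then show ?thesis using x by (simp add: unrav_w_def)
  next
    case False
    then obtain x where x: "p = q @ [x]" using c by auto
    have "is_walk E (q @ [x])" using A(1) x by (simp add: unrav_V_def is_nb_walk_def)
    then have "{last q, x} \<in> E" using ext_edge[of E q x] unrav_nonempty[OF A(2)] by simp
    then show ?thesis using x by (simp add: unrav_w_def insert_commute)
  qed
qed

theorem lemma4p2:
  fixes V :: "'v set" and E :: "'v set set" and w :: "'v set \<Rightarrow> real"
    and v :: 'v and r :: nat
  assumes "finite V" and "weighted_graph V E w" and "v \<in> V" and "r \<ge> 1"
  shows "lambda1 (ball_V V E v r) (ball_E V E v r) w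
           \<ge> lambda1 (unrav_V E v r) (unrav_E E v r) (unrav_w w)"
proof -
  note finV = assms(1) and wg = assms(2) and vV = assms(3)
  define T where "T = unrav_V E v r"
  define UE where "UE = unrav_E E v r"
  define uw where "uw = unrav_w w"
  define B where "B = ball_V V E v r"
  define BE where "BE = ball_E V E v r"
  define aT where "aT = wadj UE uw"
  define aB where "aB = wadj BE w"
  have Tsub: "set p \<subseteq> V \<and> length p \<le> r + 1 \<and> is_walk E p \<and> hd p = v" if "p \<in> T" for p
    using that walk_set[OF wg, of p] vV by (auto simp: T_def unrav_V_def is_nb_walk_def)
  have finT: "finite T"
    by (rule finite_subset[OF _ finite_lists_length_le[OF finV, of "r+1"]]) (use Tsub in auto)
  have vT: "[v] \<in> T" by (simp add: T_def unrav_V_def is_nb_walk_def is_walk_def)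
  have finB: "finite B" using finV by (rule rev_finite_subset) (auto simp: B_def ball_V_def)
  have lastB: "last p \<in> B" if "p \<in> T" for p
  proof -
    have "p \<noteq> []" using unrav_nonempty[of p E v r] that by (simp add: T_def)
    then have "last p \<in> V" using Tsub[OF that] by auto
    then show ?thesis unfolding B_def ball_V_def using Tsub[OF that] by auto
  qed
  have vB: "v \<in> B" using lastB[OF vT] by simp
  have nnT: "aT p q \<ge> 0" for p q
  proof (cases "{p, q} \<in> UE")
    case True
    then have "{last p, last q} \<in> E \<and> uw {p, q} = w {last p, last q}"
      using edge_weight[OF wg] by (simp add: UE_def uw_def)
    then show ?thesis using True edge_in_V(3)[OF wg] by (simp add: aT_def wadj_def less_imp_le)
  qed (simp add: aT_def wadj_def)
  have nnB: "aB u y \<ge> 0" for u y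
    using edge_in_V(3)[OF wg, of u y] by (auto simp: aB_def wadj_def BE_def ball_E_def less_imp_le)
  have aT_eq: "aT p q = (if {p, q} \<in> UE then aB (last p) (last q) else 0)" if "p \<in> T" "q \<in> T" for p q
  proof (cases "{p, q} \<in> UE")
    case True
    then have e: "{last p, last q} \<in> E \<and> uw {p, q} = w {last p, last q}"
      using edge_weight[OF wg] by (simp add: UE_def uw_def)
    then have "{last p, last q} \<in> BE" using lastB that by (simp add: BE_def B_def ball_E_def)
    then show ?thesis using True e by (simp add: aT_def aB_def wadj_def)
  qed (simp add: aT_def wadj_def)
  have Tne: "T \<noteq> {}" using vT by auto
  have Bne: "B \<noteq> {}" using vB by auto
  obtain xT where NxT: "(\<Sum>p\<in>T. (xT p)\<^sup>2) = 1"
    and QxT: "(\<Sum>p\<in>T. \<Sum>q\<in>T. aT p q * xT p * xT q) = lambda1 T UE uw"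
    using lambda1_facts[OF finT Tne nnT[unfolded aT_def]] unfolding aT_def by (elim exE conjE)
  obtain xB where boundB': "\<forall>z. (\<Sum>u\<in>B. \<Sum>k\<in>B. aB u k * z u * z k) \<le> lambda1 B BE w * (\<Sum>u\<in>B. (z u)\<^sup>2)"
    using lambda1_facts[OF finB Bne nnB[unfolded aB_def]] unfolding aB_def by (elim exE conjE)
  note boundB = boundB'[rule_format]
  define h where "h p = \<bar>xT p\<bar>" for p
  have hnn: "h p \<ge> 0" for p by (simp add: h_def)
  have Nh: "(\<Sum>p\<in>T. (h p)\<^sup>2) = 1" using NxT by (simp add: h_def)
  have Qh: "lambda1 T UE uw \<le> (\<Sum>p\<in>T. \<Sum>q\<in>T. aT p q * h p * h q)"
    unfolding QxT[symmetric]
  proof (intro sum_mono)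
    fix p q
    have "aT p q * xT p * xT q \<le> \<bar>aT p q * xT p * xT q\<bar>" by simp
    also have "\<dots> = aT p q * h p * h q" using nnT[of p q] by (simp add: h_def abs_mult)
    finally show "aT p q * xT p * xT q \<le> aT p q * h p * h q" .
  qed
  define Tl where "Tl u = {p \<in> T. last p = u}" for u
  define G where "G u = L2_set h (Tl u)" for u
  have finTl: "finite (Tl u)" for u using finT by (simp add: Tl_def)
  have NG: "(\<Sum>u\<in>B. (G u)\<^sup>2) = 1"
  proof -
    have "(\<Sum>u\<in>B. (G u)\<^sup>2) = (\<Sum>u\<in>B. \<Sum>p\<in>Tl u. (h p)\<^sup>2)"
      by (simp add: G_def L2_set_def sum_nonneg)
    also have "\<dots> = (\<Sum>p\<in>T. (h p)\<^sup>2)" unfolding Tl_def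
      by (rule sum.group[OF finT finB]) (use lastB in auto)
    finally show ?thesis using Nh by simp
  qed
  have pair: "(\<Sum>p\<in>Tl u. \<Sum>q\<in>Tl y. aT p q * h p * h q) \<le> aB u y * G u * G y" for u y
  proof -
    have "(\<Sum>p\<in>Tl u. \<Sum>q\<in>Tl y. aT p q * h p * h q)
        = (\<Sum>p\<in>Tl u. \<Sum>q\<in>Tl y. aB u y * (if {p, q} \<in> UE then h p * h q else 0))"
      by (intro sum.cong refl) (auto simp: Tl_def aT_eq)
    also have "\<dots> = aB u y * (\<Sum>p\<in>Tl u. \<Sum>q\<in>Tl y. (if {p, q} \<in> UE then h p * h q else 0))"
      by (simp add: sum_distrib_left)
    also have "\<dots> \<le> aB u y * (G u * G y)" unfolding G_def
    proof (rule mult_left_mono[OF match_ineq[OF finTl finTl hnn] nnB])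
      show "q1 = q2" if "p \<in> Tl u" "q1 \<in> Tl y" "q2 \<in> Tl y" "{p, q1} \<in> UE" "{p, q2} \<in> UE" for p q1 q2
        using unique_nb[of p q1 E v r q2] that by (simp add: Tl_def UE_def)
      show "p1 = p2" if "q \<in> Tl y" "p1 \<in> Tl u" "p2 \<in> Tl u" "{p1, q} \<in> UE" "{p2, q} \<in> UE" for q p1 p2
        using unique_nb[of q p1 E v r p2] that by (simp add: Tl_def UE_def insert_commute)
    qed
    finally show ?thesis by (simp add: mult.assoc)
  qed
  have QG: "(\<Sum>p\<in>T. \<Sum>q\<in>T. aT p q * h p * h q) \<le> (\<Sum>u\<in>B. \<Sum>y\<in>B. aB u y * G u * G y)"
  proof -
    have inner: "(\<Sum>q\<in>T. aT p q * h p * h q) = (\<Sum>y\<in>B. \<Sum>q\<in>Tl y. aT p q * h p * h q)" for p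
      unfolding Tl_def by (rule sum.group[OF finT finB, symmetric]) (use lastB in auto)
    have "(\<Sum>p\<in>T. \<Sum>q\<in>T. aT p q * h p * h q) = (\<Sum>p\<in>T. \<Sum>y\<in>B. \<Sum>q\<in>Tl y. aT p q * h p * h q)"
      using inner by simp
    also have "\<dots> = (\<Sum>u\<in>B. \<Sum>p\<in>Tl u. \<Sum>y\<in>B. \<Sum>q\<in>Tl y. aT p q * h p * h q)"
      unfolding Tl_def by (rule sum.group[OF finT finB, symmetric]) (use lastB in auto)
    also have "\<dots> = (\<Sum>u\<in>B. \<Sum>y\<in>B. \<Sum>p\<in>Tl u. \<Sum>q\<in>Tl y. aT p q * h p * h q)"
      by (rule sum.cong[OF refl], rule sum.swap)
    also have "\<dots> \<le> (\<Sum>u\<in>B. \<Sum>y\<in>B. aB u y * G u * G y)"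
      by (intro sum_mono pair)
    finally show ?thesis .
  qed
  have "lambda1 T UE uw \<le> lambda1 B BE w"
    using Qh QG boundB[of G] NG by simp
  then show ?thesis by (simp add: T_def UE_def uw_def B_def BE_def)
qed

end
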